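(* Let $H=(V,E)$ be a graph, $\ell\ge1$ an integer, and let $G$ be $\ell$-suspended over $H$. Then for any two vertices $x,y\in V$ and any $i\in\{0,\dots,\ell\}$ we have $d_G((x,0),(y,i))=d_G((x,\ell),(y,\ell-i))=d_H(x,y)+i$.
   Context: $d_G$ denotes graph distance (length of a shortest path) in $G$. $P_\ell$ is the path on $0,1,\dots,\ell$ and $H\times P_\ell$ is the Cartesian product (vertex set $V\times\{0,\dots,\ell\}$, with $(x,i)\sim(y,j)$ iff ($\{x,y\}\in E$ and $i=j$) or ($x=y$ and $|i-j|=1$)). A graph $G$ is $\ell$-suspended over $H$ if $G$ is a spanning subgraph of $H\times P_\ell$ that contains all edges $\{(x,i),(x,i+1)\}$ ($x\in V$, $0\le i<\ell$) and all edges $\{(x,0),(y,0)\}$ and $\{(x,\ell),(y,\ell)\}$ for $\{x,y\}\in E$. *)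

theory Defs
  imports Main "HOL-Library.Extended_Nat"
begin

definition graph :: "'a set \<Rightarrow> 'a set set \<Rightarrow> bool" where
  "graph V E \<longleftrightarrow> E \<subseteq> {{x, y} | x y. x \<in> V \<and> y \<in> V \<and> x \<noteq> y}"

fun walk :: "'a set \<Rightarrow> 'a set set \<Rightarrow> 'a list \<Rightarrow> bool" where
  "walk V E [] = False"
| "walk V E [x] = (x \<in> V)"
| "walk V E (x # y # xs) = (x \<in> V \<and> {x, y} \<in> E \<and> walk V E (y # xs))"

definition gdist :: "'a set \<Rightarrow> 'a set set \<Rightarrow> 'a \<Rightarrow> 'a \<Rightarrow> enat" where
  "gdist V E x y = (INF p \<in> {p. walk V E p \<and> hd p = x \<and> last p = y}. enat (length p - 1))"

definition prod_path_edges :: "'a set \<Rightarrow> 'a set set \<Rightarrow> nat \<Rightarrow> ('a \<times> nat) set set" where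
  "prod_path_edges V E l =
     {{(x, i), (y, i)} | x y i. {x, y} \<in> E \<and> i \<le> l}
   \<union> {{(x, i), (x, Suc i)} | x i. x \<in> V \<and> i < l}"

definition suspended :: "nat \<Rightarrow> 'a set \<Rightarrow> 'a set set \<Rightarrow> ('a \<times> nat) set set \<Rightarrow> bool" where
  "suspended l V E EG \<longleftrightarrow>
     EG \<subseteq> prod_path_edges V E l
   \<and> (\<forall>x\<in>V. \<forall>i<l. {(x, i), (x, Suc i)} \<in> EG)
   \<and> (\<forall>x y. {x, y} \<in> E \<longrightarrow> {(x, 0), (y, 0)} \<in> EG \<and> {(x, l), (y, l)} \<in> EG)"

end

theory Submission
  imports Defs
begin

lemma gdist_le: "walk V E p \<Longrightarrow> hd p = x \<Longrightarrow> last p = y \<Longrightarrow> gdist V E x y \<le> enat (length p - 1)"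
  unfolding gdist_def by (auto intro: INF_lower)

lemma gdist_ge: "(\<And>p. walk V E p \<Longrightarrow> hd p = x \<Longrightarrow> last p = y \<Longrightarrow> c \<le> enat (length p - 1)) \<Longrightarrow> c \<le> gdist V E x y"
  unfolding gdist_def by (auto intro: INF_greatest)

lemma gdist_attained:
  assumes "gdist V E x y \<noteq> \<infinity>"
  shows "\<exists>p. walk V E p \<and> hd p = x \<and> last p = y \<and> gdist V E x y = enat (length p - 1)"
proof -
  let ?S = "(\<lambda>p. enat (length p - 1)) ` {p. walk V E p \<and> hd p = x \<and> last p = y}"
  have g: "gdist V E x y = Inf ?S" unfolding gdist_def by simp
  have "?S \<noteq> {}" using assms g by (auto simp: top_enat_def[symmetric])
  then have "Inf ?S \<in> ?S" unfolding Inf_enat_def by (auto intro: LeastI)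
  then show ?thesis using g by auto
qed

lemma walk_nonempty: "walk V E p \<Longrightarrow> p \<noteq> []" by (cases p) auto

lemma walk_append: "walk V E xs \<Longrightarrow> walk V E ys \<Longrightarrow> last xs = hd ys \<Longrightarrow> walk V E (xs @ tl ys)"
proof (induction V E xs rule: walk.induct)
  case (2 V E x)
  then show ?case by (cases ys) auto
next
  case (3 V E x y xs)
  then show ?case by auto
qed auto

lemma walk_hd: "walk V E p \<Longrightarrow> hd p \<in> V"
  by (induction V E p rule: walk.induct) auto

lemma walk_rev: "walk V E p \<Longrightarrow> walk V E (rev p)"
proof (induction V E p rule: walk.induct)
  case (3 V E x y xs)
  have "walk V E (rev (y # xs) @ tl [y, x])"
    using 3 walk_hd[of V E "y # xs"] by (intro walk_append) (auto simp: insert_commute)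
  then show ?case by simp
qed auto

lemma walk_map_level:
  assumes "walk V E q" "suspended l V E EG" "c = 0 \<or> c = l"
  shows "walk (V \<times> {0..l}) EG (map (\<lambda>v. (v, c)) q)"
  using assms
proof (induction V E q rule: walk.induct)
  case (3 V E x y xs)
  then show ?case by (auto simp: suspended_def)
qed auto

lemma walk_vert:
  assumes "suspended l V E EG" "y \<in> V" "a \<le> b" "b \<le> l"
  shows "walk (V \<times> {0..l}) EG (map (\<lambda>j. (y, j)) [a..<Suc b])"
  using assms(3,4)
proof (induction b)
  case 0
  then show ?case using assms by simp
next
  case (Suc b)
  show ?case
  proof (cases "a = Suc b")
    case True
    then show ?thesis using assms Suc by simp
  next
    case False
    then have ab: "a \<le> b" using Suc by simp
    have w: "walk (V \<times> {0..l}) EG (map (\<lambda>j. (y, j)) [a..<Suc b])" using Suc ab by simp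
    have e: "walk (V \<times> {0..l}) EG [(y, b), (y, Suc b)]"
      using assms Suc by (auto simp: suspended_def)
    have "walk (V \<times> {0..l}) EG (map (\<lambda>j. (y, j)) [a..<Suc b] @ tl [(y, b), (y, Suc b)])"
      by (rule walk_append[OF w e]) (use ab in simp)
    then show ?thesis using ab by simp
  qed
qed

lemma proj:
  "walk (V \<times> {0..l}) EG p \<Longrightarrow> EG \<subseteq> prod_path_edges V E l \<Longrightarrow>
   \<exists>q. walk V E q \<and> hd q = fst (hd p) \<and> last q = fst (last p) \<and>
       length q - 1 + nat \<bar>int (snd (hd p)) - int (snd (last p))\<bar> \<le> length p - 1"
proof (induction "V \<times> {0..l}" EG p rule: walk.induct)
  case (2 E x)
  then show ?case by (intro exI[of _ "[fst x]"]) auto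
next
  case (3 EG a b xs)
  then obtain q where q: "walk V E q" "hd q = fst b" "last q = fst (last (b # xs))"
    "length q - 1 + nat \<bar>int (snd b) - int (snd (last (b # xs)))\<bar> \<le> length (b # xs) - 1"
    by auto
  have qne: "q \<noteq> []" using q(1) walk_nonempty by blast
  have ab: "{a, b} \<in> prod_path_edges V E l" using 3 by auto
  have aV: "fst a \<in> V" using 3 by auto
  show ?case
  proof (cases "snd a = snd b")
    case True
    then have "{fst a, fst b} \<in> E"
      using ab by (auto simp: prod_path_edges_def doubleton_eq_iff insert_commute)
    then have "walk V E (fst a # q)" using q qne aV by (cases q) auto
    then show ?thesis using q qne True by (intro exI[of _ "fst a # q"]) auto
  next
    case False
    then have "fst a = fst b \<and> (snd b = Suc (snd a) \<or> snd a = Suc (snd b))"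
      using ab by (auto simp: prod_path_edges_def doubleton_eq_iff)
    then show ?thesis using q by (intro exI[of _ q]) auto
  qed
qed auto

lemma lower:
  assumes "suspended l V E EG" "walk (V \<times> {0..l}) EG p" "hd p = (x, a)" "last p = (y, b)"
  shows "gdist V E x y + enat (nat \<bar>int a - int b\<bar>) \<le> enat (length p - 1)"
proof -
  obtain q where q: "walk V E q" "hd q = x" "last q = y"
    "length q - 1 + nat \<bar>int a - int b\<bar> \<le> length p - 1"
    using proj[OF assms(2)] assms by (auto simp: suspended_def)
  have "gdist V E x y \<le> enat (length q - 1)" using gdist_le q by metis
  then have "gdist V E x y + enat (nat \<bar>int a - int b\<bar>) \<le> enat (length q - 1) + enat (nat \<bar>int a - int b\<bar>)"
    by (rule add_right_mono)
  also have "\<dots> \<le> enat (length p - 1)" using q(4) by simp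
  finally show ?thesis .
qed

theorem lemma3p2:
  fixes V :: "'a set" and E :: "'a set set" and EG :: "('a \<times> nat) set set" and l :: nat
  assumes "graph V E" and "l \<ge> 1" and "suspended l V E EG"
    and "x \<in> V" and "y \<in> V" and "i \<le> l"
  shows "gdist (V \<times> {0..l}) EG (x, 0) (y, i) = gdist V E x y + enat i
       \<and> gdist (V \<times> {0..l}) EG (x, l) (y, l - i) = gdist V E x y + enat i"
proof
  let ?G = "V \<times> {0..l}"
  have lo1: "gdist V E x y + enat i \<le> gdist ?G EG (x, 0) (y, i)"
    by (rule gdist_ge) (use lower[OF assms(3)] in fastforce)
  have lo2: "gdist V E x y + enat i \<le> gdist ?G EG (x, l) (y, l - i)"
  proof (rule gdist_ge)
    fix p assume "walk ?G EG p" "hd p = (x, l)" "last p = (y, l - i)"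
    from lower[OF assms(3) this] show "gdist V E x y + enat i \<le> enat (length p - 1)"
      using assms(6) by (simp add: nat_diff_distrib of_nat_diff)
  qed
  have up: "gdist ?G EG (x, 0) (y, i) \<le> gdist V E x y + enat i
      \<and> gdist ?G EG (x, l) (y, l - i) \<le> gdist V E x y + enat i"
  proof (cases "gdist V E x y = \<infinity>")
    case True
    then show ?thesis by simp
  next
    case False
    then obtain q where q: "walk V E q" "hd q = x" "last q = y" "gdist V E x y = enat (length q - 1)"
      using gdist_attained by metis
    have qne: "q \<noteq> []" using q(1) walk_nonempty by blast
    define v1 where "v1 = map (\<lambda>j. (y, j)) [0..<Suc i]"
    have w1: "walk ?G EG v1" unfolding v1_def using walk_vert[OF assms(3,5)] assms(6) by simp
    have wq0: "walk ?G EG (map (\<lambda>v. (v, 0)) q)" using walk_map_level[OF q(1) assms(3)] by simp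
    have hv1: "hd v1 = (y, 0)" unfolding v1_def by (simp del: upt_Suc add: upt_rec)
    have lv1: "last v1 = (y, i)" unfolding v1_def by simp
    have wa: "walk ?G EG (map (\<lambda>v. (v, 0)) q @ tl v1)"
      by (rule walk_append[OF wq0 w1]) (use q qne hv1 in \<open>simp add: last_map\<close>)
    have "gdist ?G EG (x, 0) (y, i) \<le> enat (length (map (\<lambda>v. (v, 0)) q @ tl v1) - 1)"
    proof (rule gdist_le[OF wa])
      show "hd (map (\<lambda>v. (v, 0)) q @ tl v1) = (x, 0)" using q qne by (simp add: hd_map)
      have lenv1: "length v1 = Suc i" unfolding v1_def by simp
      show "last (map (\<lambda>v. (v, 0)) q @ tl v1) = (y, i)"
      proof (cases "i = 0")
        case True
        then show ?thesis using q qne by (simp add: last_map v1_def)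
      next
        case False
        then have "tl v1 \<noteq> []" using lenv1 by (cases v1) auto
        then have "last (tl v1) = last v1" using last_tl by blast
        then show ?thesis using \<open>tl v1 \<noteq> []\<close> lv1 by simp
      qed
    qed
    also have "\<dots> = gdist V E x y + enat i" using q(4) qne by (cases q) (simp_all add: v1_def)
    finally have u1: "gdist ?G EG (x, 0) (y, i) \<le> gdist V E x y + enat i" .
    define v2 where "v2 = rev (map (\<lambda>j. (y, j)) [l - i..<Suc l])"
    have w2: "walk ?G EG v2" unfolding v2_def
      by (rule walk_rev, rule walk_vert[OF assms(3,5)]) auto
    have wql: "walk ?G EG (map (\<lambda>v. (v, l)) q)" using walk_map_level[OF q(1) assms(3)] by simp
    have hv2: "hd v2 = (y, l)" unfolding v2_def by (simp add: hd_rev)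
    have lv2: "last v2 = (y, l - i)" unfolding v2_def using assms(6) by (simp del: upt_Suc add: last_rev hd_map upt_rec less_Suc_eq_le)
    have wb: "walk ?G EG (map (\<lambda>v. (v, l)) q @ tl v2)"
      by (rule walk_append[OF wql w2]) (use q qne hv2 in \<open>simp add: last_map\<close>)
    have lenv2: "length v2 = Suc i" unfolding v2_def using assms(6) by simp
    have "gdist ?G EG (x, l) (y, l - i) \<le> enat (length (map (\<lambda>v. (v, l)) q @ tl v2) - 1)"
    proof (rule gdist_le[OF wb])
      show "hd (map (\<lambda>v. (v, l)) q @ tl v2) = (x, l)" using q qne by (simp add: hd_map)
      show "last (map (\<lambda>v. (v, l)) q @ tl v2) = (y, l - i)"
      proof (cases "i = 0")
        case True
        then show ?thesis using q qne lenv2 assms(6) by (simp add: last_map v2_def)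
      next
        case False
        then have "tl v2 \<noteq> []" using lenv2 by (cases v2) auto
        then have "last (tl v2) = last v2" using last_tl by blast
        then show ?thesis using \<open>tl v2 \<noteq> []\<close> lv2 by simp
      qed
    qed
    also have "\<dots> = gdist V E x y + enat i" using q(4) qne lenv2 by (cases q) simp_all
    finally show ?thesis using u1 by simp
  qed
  show "gdist ?G EG (x, 0) (y, i) = gdist V E x y + enat i" using up lo1 by (meson order_antisym)
  show "gdist ?G EG (x, l) (y, l - i) = gdist V E x y + enat i" using up lo2 by (meson order_antisym)
qed

end
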